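(* Let $d\ge1$, $L\ge1$, and let $\ell:[0,1]^2\to\mathbb{R}_{\ge0}$ be continuous with $\ell(y,y)=0$ for all $y\in[0,1]$. For every sequence $(x_t)_{t\ge1}\subseteq[-1,1]^d$ and every $f^\star\in\mathcal{H}_L$ with $y_t=f^\star(x_t)$, the (deterministic) envelope strategy satisfies $\lim_{t\to\infty}\ell(\hat y_t,y_t)=0$.
   Context: $\mathcal{H}_L$ is the set of functions $h:[-1,1]^d\to[0,1]$ with $|h(x)-h(x')|\le L\|x-x'\|_\infty$. Envelope strategy: at round $t$, with past data $(x_s,y_s)_{s<t}$, define $\underline h_t(x)=\max\{0,\max_{s<t}(y_s-L\|x-x_s\|_\infty)\}$ and $\overline h_t(x)=\min\{1,\min_{s<t}(y_s+L\|x-x_s\|_\infty)\}$ (with $\max_{\emptyset}=-\infty$, $\min_\emptyset=+\infty$), and predict $\hat y_t=\frac12(\underline h_t(x_t)+\overline h_t(x_t))$. *)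

theory Defs
  imports "HOL-Analysis.Analysis"
begin

text \<open>Sup-norm distance on R^d (d = CARD('d) \<ge> 1, since types are nonempty).\<close>
definition linf_dist :: "real^'d \<Rightarrow> real^'d \<Rightarrow> real" where
  "linf_dist x x' = Max (range (\<lambda>i. \<bar>x $ i - x' $ i\<bar>))"

definition cube :: "(real^'d) set" where
  "cube = {x. \<forall>i. -1 \<le> x $ i \<and> x $ i \<le> 1}"

definition lip_class :: "real \<Rightarrow> (real^'d \<Rightarrow> real) set" where
  "lip_class L = {h. (\<forall>x\<in>cube. 0 \<le> h x \<and> h x \<le> 1) \<and>
      (\<forall>x\<in>cube. \<forall>x'\<in>cube. \<bar>h x - h x'\<bar> \<le> L * linf_dist x x')}"

text \<open>Lower and upper envelopes at round t, built from the data (xs s, ys s) for s < t.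
  Rounds are indexed from 0; max over the empty set is -infinity, min is +infinity.\<close>
definition lower_env :: "real \<Rightarrow> (nat \<Rightarrow> real^'d) \<Rightarrow> (nat \<Rightarrow> real) \<Rightarrow> nat \<Rightarrow> real^'d \<Rightarrow> real" where
  "lower_env L xs ys t x =
     (if t = 0 then 0 else max 0 (Max ((\<lambda>s. ys s - L * linf_dist x (xs s)) ` {..<t})))"

definition upper_env :: "real \<Rightarrow> (nat \<Rightarrow> real^'d) \<Rightarrow> (nat \<Rightarrow> real) \<Rightarrow> nat \<Rightarrow> real^'d \<Rightarrow> real" where
  "upper_env L xs ys t x =
     (if t = 0 then 1 else min 1 (Min ((\<lambda>s. ys s + L * linf_dist x (xs s)) ` {..<t})))"

definition envelope_pred :: "real \<Rightarrow> (nat \<Rightarrow> real^'d) \<Rightarrow> (nat \<Rightarrow> real) \<Rightarrow> nat \<Rightarrow> real" where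
  "envelope_pred L xs ys t = (lower_env L xs ys t (xs t) + upper_env L xs ys t (xs t)) / 2"

end

theory Submission
  imports Defs
begin

lemma linf_comp: "\<bar>x $ i - y $ i\<bar> \<le> linf_dist x y"
  unfolding linf_dist_def by (rule Max_ge) auto

lemma linf_le_dist: "linf_dist x y \<le> dist x y"
  unfolding linf_dist_def dist_norm
  by (rule Max.boundedI) (auto intro: order_trans[OF _ component_le_norm_cart] simp del: vector_minus_component
       simp add: vector_minus_component[symmetric])

lemma linf_nonneg: "0 \<le> linf_dist x y"
  using linf_comp[of x undefined y] by (meson abs_ge_zero order_trans)

lemma sep_eventually:
  fixes xs :: "nat \<Rightarrow> real^'d"
  assumes cube: "\<forall>t. xs t \<in> cube" and e: "e > 0"
  shows "\<forall>\<^sub>F t in sequentially. \<exists>s<t. linf_dist (xs t) (xs s) < e"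
proof -
  define B where "B = {t. \<forall>s<t. linf_dist (xs t) (xs s) \<ge> e}"
  have "finite B"
  proof (rule ccontr)
    assume "infinite B"
    then obtain r :: "nat \<Rightarrow> nat" where r: "strict_mono r" "\<And>n. r n \<in> B" using infinite_enumerate by blast
    have "cube \<subseteq> cball (0::real^'d) (real CARD('d))"
    proof
      fix x :: "real^'d" assume "x \<in> cube"
      then have "\<And>i. \<bar>x $ i\<bar> \<le> 1" unfolding cube_def by (auto simp: abs_le_iff)
      then have "(\<Sum>i\<in>UNIV. \<bar>x $ i\<bar>) \<le> (\<Sum>i\<in>(UNIV::'d set). 1)" by (intro sum_mono) auto
      then show "x \<in> cball 0 (real CARD('d))" using norm_le_l1_cart[of x] by simp
    qed
    then have "range (xs \<circ> r) \<subseteq> cball 0 (real CARD('d))" using cube by auto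
    then have "bounded (range (xs \<circ> r))" by (rule bounded_subset[OF bounded_cball])
    from bounded_imp_convergent_subsequence[OF this] obtain l and q :: "nat \<Rightarrow> nat"
      where q: "strict_mono q" "(xs \<circ> r \<circ> q) \<longlonglongrightarrow> l" by blast
    then have "Cauchy (xs \<circ> r \<circ> q)" using LIMSEQ_imp_Cauchy by blast
    then obtain N where N: "\<And>m n. m \<ge> N \<Longrightarrow> n \<ge> N \<Longrightarrow> dist ((xs \<circ> r \<circ> q) m) ((xs \<circ> r \<circ> q) n) < e"
      using e unfolding Cauchy_def by blast
    have sm: "strict_mono (r \<circ> q)" using r(1) q(1) by (simp add: strict_mono_o)
    then have lt: "r (q N) < r (q (Suc N))" by (simp add: strict_mono_def)
    have "r (q (Suc N)) \<in> B" using r(2) by blast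
    then have "linf_dist (xs (r (q (Suc N)))) (xs (r (q N))) \<ge> e" using lt unfolding B_def by blast
    moreover have "dist (xs (r (q (Suc N)))) (xs (r (q N))) < e" using N[of "Suc N" N] by simp
    ultimately show False using linf_le_dist[of "xs (r (q (Suc N)))" "xs (r (q N))"] by linarith
  qed
  then obtain M where M: "\<forall>t\<in>B. t < M" unfolding finite_nat_set_iff_bounded by blast
  show ?thesis unfolding eventually_sequentially
  proof (rule exI[of _ M], intro allI impI)
    fix t assume "M \<le> t" then have "t \<notin> B" using M by auto
    then show "\<exists>s<t. linf_dist (xs t) (xs s) < e" unfolding B_def by (auto simp: not_le)
  qed
qed

lemma midpt: fixes a c l u y :: real
  assumes "a - c \<le> l" "u \<le> a + c" "l \<le> y" "y \<le> u"
  shows "\<bar>(l+u)/2 - y\<bar> \<le> c"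
proof -
  have h: "\<bar>l + u - 2*y\<bar> \<le> 2*c" using assms unfolding abs_le_iff by (intro conjI; linarith)
  have e: "(l+u)/2 - y = (l+u-2*y)/2" by (simp add: field_simps)
  show ?thesis unfolding e using h by (auto simp: abs_divide)
qed

lemma pred_bounds:
  fixes xs :: "nat \<Rightarrow> real^'d" and f :: "real^'d \<Rightarrow> real"
  assumes cube: "\<forall>t. xs t \<in> cube" and f: "f \<in> lip_class L"
  shows "0 \<le> envelope_pred L xs (\<lambda>s. f (xs s)) t \<and> envelope_pred L xs (\<lambda>s. f (xs s)) t \<le> 1
     \<and> (\<forall>s<t. \<bar>envelope_pred L xs (\<lambda>s. f (xs s)) t - f (xs t)\<bar> \<le> L * linf_dist (xs t) (xs s))"
proof -
  have f01: "\<And>x. x \<in> cube \<Longrightarrow> 0 \<le> f x \<and> f x \<le> 1" using f unfolding lip_class_def by auto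
  have lip: "\<And>x x'. x \<in> cube \<Longrightarrow> x' \<in> cube \<Longrightarrow> \<bar>f x - f x'\<bar> \<le> L * linf_dist x x'"
    using f unfolding lip_class_def by auto
  define lo where "lo = lower_env L xs (\<lambda>s. f (xs s)) t (xs t)"
  define up where "up = upper_env L xs (\<lambda>s. f (xs s)) t (xs t)"
  have ft: "0 \<le> f (xs t)" "f (xs t) \<le> 1" using f01 cube by auto
  have lo0: "0 \<le> lo" unfolding lo_def lower_env_def by auto
  have up1: "up \<le> 1" unfolding up_def upper_env_def by auto
  have lof: "lo \<le> f (xs t)"
  proof (cases "t = 0")
    case True then show ?thesis using ft unfolding lo_def lower_env_def by simp
  next
    case False
    have "\<forall>s<t. f (xs s) - L * linf_dist (xs t) (xs s) \<le> f (xs t)"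
      using lip cube by (smt (verit))
    then show ?thesis using False ft unfolding lo_def lower_env_def by (auto intro!: Max.boundedI)
  qed
  have upf: "f (xs t) \<le> up"
  proof (cases "t = 0")
    case True then show ?thesis using ft unfolding up_def upper_env_def by simp
  next
    case False
    have "\<forall>s<t. f (xs t) \<le> f (xs s) + L * linf_dist (xs t) (xs s)"
      using lip cube by (smt (verit))
    then show ?thesis using False ft unfolding up_def upper_env_def by (auto intro!: Min.boundedI)
  qed
  have los: "\<And>s. s < t \<Longrightarrow> f (xs s) - L * linf_dist (xs t) (xs s) \<le> lo"
  proof -
    fix s assume s: "s < t"
    then have "f (xs s) - L * linf_dist (xs t) (xs s) \<le> Max ((\<lambda>s. f (xs s) - L * linf_dist (xs t) (xs s)) ` {..<t})"
      by (intro Max_ge) auto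
    moreover have "t \<noteq> 0" using s by auto
    ultimately show "f (xs s) - L * linf_dist (xs t) (xs s) \<le> lo" unfolding lo_def lower_env_def
      by (simp add: le_max_iff_disj)
  qed
  have ups: "\<And>s. s < t \<Longrightarrow> up \<le> f (xs s) + L * linf_dist (xs t) (xs s)"
  proof -
    fix s assume s: "s < t"
    then have "Min ((\<lambda>s. f (xs s) + L * linf_dist (xs t) (xs s)) ` {..<t}) \<le> f (xs s) + L * linf_dist (xs t) (xs s)"
      by (intro Min_le) auto
    moreover have "t \<noteq> 0" using s by auto
    ultimately show "up \<le> f (xs s) + L * linf_dist (xs t) (xs s)" unfolding up_def upper_env_def
      by (simp add: min_le_iff_disj)
  qed
  have ep: "envelope_pred L xs (\<lambda>s. f (xs s)) t = (lo + up) / 2"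
    unfolding envelope_pred_def lo_def up_def by simp
  have "\<forall>s<t. \<bar>(lo + up) / 2 - f (xs t)\<bar> \<le> L * linf_dist (xs t) (xs s)"
  proof (intro allI impI)
    fix s assume "s < t"
    from los[OF this] ups[OF this] lof upf
    show "\<bar>(lo + up) / 2 - f (xs t)\<bar> \<le> L * linf_dist (xs t) (xs s)" by (rule midpt)
  qed
  moreover have "0 \<le> lo + up" "lo + up \<le> 2" using lo0 up1 lof upf by linarith+
  ultimately show ?thesis unfolding ep by simp
qed

theorem corollary1p4:
  fixes L :: real and loss :: "real \<Rightarrow> real \<Rightarrow> real"
    and xs :: "nat \<Rightarrow> real^'d" and fstar :: "real^'d \<Rightarrow> real"
  assumes "L \<ge> 1"
    and "continuous_on ({0..1} \<times> {0..1}) (\<lambda>(a, b). loss a b)"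
    and "\<forall>a\<in>{0..1}. \<forall>b\<in>{0..1}. loss a b \<ge> 0"
    and "\<forall>y\<in>{0..1}. loss y y = 0"
    and "\<forall>t. xs t \<in> cube"
    and "fstar \<in> lip_class L"
  shows "(\<lambda>t. loss (envelope_pred L xs (\<lambda>s. fstar (xs s)) t) (fstar (xs t))) \<longlonglongrightarrow> 0"
proof (rule LIMSEQ_I)
  fix r :: real assume r: "0 < r"
  define S where "S = ({0..1} \<times> {0..1} :: (real \<times> real) set)"
  have "uniformly_continuous_on S (\<lambda>(a, b). loss a b)"
    using assms(2) unfolding S_def by (intro compact_uniformly_continuous) (auto intro: compact_Times)
  then obtain d where d: "d > 0" and
    dd: "\<And>p q. p \<in> S \<Longrightarrow> q \<in> S \<Longrightarrow> dist q p < d \<Longrightarrow> dist ((\<lambda>(a, b). loss a b) q) ((\<lambda>(a, b). loss a b) p) < r"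
    using r unfolding uniformly_continuous_on_def by blast
  have "d / L > 0" using d assms(1) by simp
  from sep_eventually[OF assms(5) this] obtain N where
    N: "\<And>t. t \<ge> N \<Longrightarrow> \<exists>s<t. linf_dist (xs t) (xs s) < d / L"
    unfolding eventually_sequentially by blast
  show "\<exists>no. \<forall>n\<ge>no. norm (loss (envelope_pred L xs (\<lambda>s. fstar (xs s)) n) (fstar (xs n)) - 0) < r"
  proof (intro exI allI impI)
    fix t assume "t \<ge> N"
    then obtain s where s: "s < t" "linf_dist (xs t) (xs s) < d / L" using N by blast
    define p where "p = envelope_pred L xs (\<lambda>s. fstar (xs s)) t"
    define y where "y = fstar (xs t)"
    have pb: "0 \<le> p" "p \<le> 1" "\<bar>p - y\<bar> \<le> L * linf_dist (xs t) (xs s)"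
      using pred_bounds[OF assms(5,6), of t] s unfolding p_def y_def by auto
    have "L * linf_dist (xs t) (xs s) < d" using s(2) assms(1)
      by (simp add: pos_less_divide_eq mult.commute)
    then have pyd: "\<bar>p - y\<bar> < d" using pb by linarith
    have yb: "0 \<le> y" "y \<le> 1" using assms(5,6) unfolding y_def lip_class_def by auto
    have "dist (p, y) (y, y) < d" using pyd by (simp add: dist_Pair_Pair dist_real_def)
    then have "dist (loss p y) (loss y y) < r"
      using dd[of "(y, y)" "(p, y)"] pb yb unfolding S_def by auto
    then show "norm (loss (envelope_pred L xs (\<lambda>s. fstar (xs s)) t) (fstar (xs t)) - 0) < r"
      using assms(4) yb unfolding p_def[symmetric] y_def[symmetric] by (simp add: dist_real_def)
  qed
qed

end
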